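(* For any simple undirected graph $G$, $$n_G(\mathcal{C}_4)=\frac14\sum_{st\in E}\sum_{u\in\Gamma(t)\setminus\{s\}}\big(|c(s,u)|-1\big),$$ where in the outer sum each edge $\{s,t\}$ appears once, with its endpoints named $s$ and $t$ in an arbitrary fixed way.
   Context: $\Gamma(x)$ is the neighbourhood of $x$ and $c(s,u)=\Gamma(s)\cap\Gamma(u)$. $\mathcal{C}_4$ is the cycle on 4 vertices and $n_G(\mathcal{C}_4)$ the number of subgraphs of $G$ isomorphic to it. *)

theory Defs
  imports Complex_Main
begin

definition simple_graph :: "'a set \<Rightarrow> 'a set set \<Rightarrow> bool" where
  "simple_graph V E \<longleftrightarrow> finite V \<and> (\<forall>e\<in>E. \<exists>x y. x \<noteq> y \<and> x \<in> V \<and> y \<in> V \<and> e = {x, y})"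

definition nbhd :: "'a set \<Rightarrow> 'a set set \<Rightarrow> 'a \<Rightarrow> 'a set" where
  "nbhd V E x = {y \<in> V. {x, y} \<in> E}"

definition common_nbhd :: "'a set \<Rightarrow> 'a set set \<Rightarrow> 'a \<Rightarrow> 'a \<Rightarrow> 'a set" where
  "common_nbhd V E s u = nbhd V E s \<inter> nbhd V E u"

definition C4_subgraphs :: "'a set \<Rightarrow> 'a set set \<Rightarrow> ('a set \<times> 'a set set) set" where
  "C4_subgraphs V E = {(V', E'). V' \<subseteq> V \<and> E' \<subseteq> E \<and>
     (\<exists>a b c d. distinct [a, b, c, d] \<and> V' = {a, b, c, d} \<and>
        E' = {{a, b}, {b, c}, {c, d}, {d, a}})}"

definition n_C4 :: "'a set \<Rightarrow> 'a set set \<Rightarrow> nat" where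
  "n_C4 V E = card (C4_subgraphs V E)"

end

theory Submission
  imports Defs
begin

lemma nb4:
  assumes "{x,y} \<in> {{a,b},{b,c},{c,d},{d,a}}"
  shows "(x=a \<and> (y=b\<or>y=d)) \<or> (x=b \<and> (y=a\<or>y=c)) \<or> (x=c\<and>(y=b\<or>y=d)) \<or> (x=d\<and>(y=c\<or>y=a))"
  using assms unfolding insert_iff empty_iff doubleton_eq_iff by blast
lemma fib4:
  assumes "distinct [a,b,c,d]" "distinct [s,t,u,w]"
   "{{s,t},{t,u},{u,w},{w,s}} = {{a,b},{b,c},{c,d},{d,a}}"
  shows "((s,t),(u,w)) \<in> {((a,b),(c,d)),((b,c),(d,a)),((c,d),(a,b)),((d,a),(b,c)),
                           ((a,d),(c,b)),((d,c),(b,a)),((c,b),(a,d)),((b,a),(d,c))}"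
proof -
  have st: "{s,t} \<in> {{a,b},{b,c},{c,d},{d,a}}" using assms(3) by (metis insertI1)
  have tu: "{t,u} \<in> {{a,b},{b,c},{c,d},{d,a}}" using assms(3) by (metis insertI1 insertI2)
  have uw: "{u,w} \<in> {{a,b},{b,c},{c,d},{d,a}}" using assms(3) by (metis insertI1 insertI2)
  note n1 = nb4[OF st] and n2 = nb4[OF tu] and n3 = nb4[OF uw]
  have D: "a\<noteq>b" "a\<noteq>c" "a\<noteq>d" "b\<noteq>c" "b\<noteq>d" "c\<noteq>d" "b\<noteq>a" "c\<noteq>a" "d\<noteq>a" "c\<noteq>b" "d\<noteq>b" "d\<noteq>c"
    using assms(1) by auto
  have D2: "s\<noteq>t" "s\<noteq>u" "t\<noteq>u" "u\<noteq>w" "t\<noteq>w" "s\<noteq>w" "t\<noteq>s" "u\<noteq>s" "u\<noteq>t" "w\<noteq>u" "w\<noteq>t" "w\<noteq>s"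
    using assms(2) by auto
  from n1 show ?thesis
  proof (elim disjE conjE)
  qed (use D D2 in \<open>simp_all\<close>; use n2 n3 D D2 in \<open>simp\<close>)+
qed

definition cyc :: "'a set set \<Rightarrow> (('a \<times> 'a) \<times> ('a \<times> 'a)) set" where
  "cyc E = {((a,b),(c,d)). distinct [a,b,c,d] \<and> {a,b}\<in>E \<and> {b,c}\<in>E \<and> {c,d}\<in>E \<and> {d,a}\<in>E}"

definition fC :: "('a \<times> 'a) \<times> ('a \<times> 'a) \<Rightarrow> 'a set \<times> 'a set set" where
  "fC x = (case x of ((a,b),(c,d)) \<Rightarrow> ({a,b,c,d}, {{a,b},{b,c},{c,d},{d,a}}))"

lemma edgeV:
  assumes "simple_graph V E" "{x,y} \<in> E"
  shows "x \<in> V \<and> y \<in> V \<and> x \<noteq> y"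
  using assms unfolding simple_graph_def by (auto simp: doubleton_eq_iff)

lemma cyc_fin:
  assumes "simple_graph V E"
  shows "finite (cyc E)"
proof -
  have "cyc E \<subseteq> (V \<times> V) \<times> (V \<times> V)"
    using edgeV[OF assms] unfolding cyc_def by auto
  moreover have "finite V" using assms simple_graph_def by blast
  ultimately show ?thesis by (meson finite_SigmaI finite_subset)
qed

lemma cyc_image:
  assumes "simple_graph V E"
  shows "fC ` cyc E = C4_subgraphs V E"
proof
  show "fC ` cyc E \<subseteq> C4_subgraphs V E"
  proof
    fix y assume "y \<in> fC ` cyc E"
    then obtain a b c d where x: "((a,b),(c,d)) \<in> cyc E" "y = fC ((a,b),(c,d))" by auto
    then show "y \<in> C4_subgraphs V E"
      using edgeV[OF assms] unfolding cyc_def C4_subgraphs_def fC_def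
      by auto
  qed
next
  show "C4_subgraphs V E \<subseteq> fC ` cyc E"
  proof
    fix y assume "y \<in> C4_subgraphs V E"
    then obtain a b c d where "distinct [a,b,c,d]" "y = ({a,b,c,d}, {{a,b},{b,c},{c,d},{d,a}})"
      "{{a,b},{b,c},{c,d},{d,a}} \<subseteq> E"
      unfolding C4_subgraphs_def by auto
    then have "((a,b),(c,d)) \<in> cyc E" "y = fC ((a,b),(c,d))"
      unfolding cyc_def fC_def by auto
    then show "y \<in> fC ` cyc E" by blast
  qed
qed

lemma cyc_fibre:
  assumes "simple_graph V E" "y \<in> C4_subgraphs V E"
  shows "card {x \<in> cyc E. fC x = y} = 8"
proof -
  obtain a b c d where d: "distinct [a,b,c,d]" and y: "y = ({a,b,c,d}, {{a,b},{b,c},{c,d},{d,a}})"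
    and sub: "{{a,b},{b,c},{c,d},{d,a}} \<subseteq> E"
    using assms(2) unfolding C4_subgraphs_def by auto
  let ?S = "{((a,b),(c,d)),((b,c),(d,a)),((c,d),(a,b)),((d,a),(b,c)),
             ((a,d),(c,b)),((d,c),(b,a)),((c,b),(a,d)),((b,a),(d,c))}"
  have "{x \<in> cyc E. fC x = y} = ?S"
  proof
    show "{x \<in> cyc E. fC x = y} \<subseteq> ?S"
    proof
      fix x assume "x \<in> {x \<in> cyc E. fC x = y}"
      then obtain s t u w where x: "x = ((s,t),(u,w))" "distinct [s,t,u,w]"
        "{{s,t},{t,u},{u,w},{w,s}} = {{a,b},{b,c},{c,d},{d,a}}"
        unfolding cyc_def fC_def y by auto
      show "x \<in> ?S" using fib4[OF d x(2,3)] x(1) by simp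
    qed
  next
    show "?S \<subseteq> {x \<in> cyc E. fC x = y}"
      using d sub unfolding cyc_def fC_def y by (auto simp: insert_commute)
  qed
  moreover have "card ?S = 8" using d by simp
  ultimately show ?thesis by simp
qed

lemma card_cyc:
  assumes "simple_graph V E"
  shows "card (cyc E) = 8 * n_C4 V E"
proof -
  have fin: "finite (C4_subgraphs V E)"
    using cyc_image[OF assms] cyc_fin[OF assms] by (metis finite_imageI)
  have eq: "cyc E = (\<Union>y\<in>C4_subgraphs V E. {x \<in> cyc E. fC x = y})"
    using cyc_image[OF assms] by auto
  have "card (cyc E) = (\<Sum>y\<in>C4_subgraphs V E. card {x \<in> cyc E. fC x = y})"
    by (subst eq, rule card_UN_disjoint)
      (auto simp: fin cyc_fin[OF assms])
  also have "\<dots> = (\<Sum>y\<in>C4_subgraphs V E. 8)"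
    using cyc_fibre[OF assms] by simp
  finally show ?thesis by (simp add: n_C4_def)
qed

lemma D_orient:
  assumes "bij_betw (\<lambda>(s, t). {s, t}) D E" "{a,b} \<in> E" "a \<noteq> b"
  shows "((a,b) \<in> D) \<noteq> ((b,a) \<in> D)"
proof -
  have "{a,b} \<in> (\<lambda>(s, t). {s, t}) ` D" using assms(1,2) bij_betw_imp_surj_on by blast
  then obtain x y where p: "(x,y) \<in> D" "{x,y} = {a,b}" by auto
  then have "(x,y) = (a,b) \<or> (x,y) = (b,a)" by (simp add: doubleton_eq_iff)
  then have "(a,b) \<in> D \<or> (b,a) \<in> D" using p(1) by blast
  moreover have "\<not> ((a,b) \<in> D \<and> (b,a) \<in> D)"
  proof
    assume "(a,b) \<in> D \<and> (b,a) \<in> D"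
    moreover have "(\<lambda>(s,t). {s,t}) (a,b) = (\<lambda>(s,t). {s,t}) (b,a)" by (simp add: insert_commute)
    ultimately have "(a,b) = (b,a)" using inj_onD[OF bij_betw_imp_inj_on[OF assms(1)]] by blast
    then show False using assms(3) by simp
  qed
  ultimately show ?thesis by blast
qed

definition rv :: "('a \<times> 'a) \<times> ('a \<times> 'a) \<Rightarrow> ('a \<times> 'a) \<times> ('a \<times> 'a)" where
  "rv x = (case x of ((a,b),(c,d)) \<Rightarrow> ((b,a),(d,c)))"

lemma rv_rv[simp]: "rv (rv x) = x"
  unfolding rv_def by (auto split: prod.splits)

lemma rv_simp[simp]: "rv ((a,b),(c,d)) = ((b,a),(d,c))"
  by (simp add: rv_def)

lemma rv_cyc:
  assumes "x \<in> cyc E" shows "rv x \<in> cyc E"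
proof -
  obtain a b c d where x: "x = ((a,b),(c,d))" by (metis prod.collapse)
  have cm: "{p,q} = {q,p}" for p q :: 'a by blast
  have "distinct [a,b,c,d]" "{a,b}\<in>E" "{b,c}\<in>E" "{c,d}\<in>E" "{d,a}\<in>E"
    using assms unfolding x cyc_def by simp_all
  then have "distinct [b,a,d,c]" "{b,a}\<in>E" "{a,d}\<in>E" "{d,c}\<in>E" "{c,b}\<in>E"
    using cm[of a b] cm[of d a] cm[of c d] cm[of b c] by auto
  then show ?thesis unfolding x cyc_def by simp
qed

lemma card_T1:
  assumes "simple_graph V E" "bij_betw (\<lambda>(s, t). {s, t}) D E"
  shows "card (cyc E) = 2 * card {x \<in> cyc E. fst x \<in> D}"
proof -
  define T1 where "T1 = {x \<in> cyc E. fst x \<in> D}"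
  define T2 where "T2 = {x \<in> cyc E. fst (rv x) \<in> D}"
  have orient: "(fst x \<in> D) \<noteq> (fst (rv x) \<in> D)" if "x \<in> cyc E" for x
  proof -
    obtain a b c d where x: "x = ((a,b),(c,d))" by (metis prod.collapse)
    have "{a,b} \<in> E" "a \<noteq> b" using that unfolding x cyc_def by simp_all
    then show ?thesis using D_orient[OF assms(2)] unfolding x by simp
  qed
  have U: "cyc E = T1 \<union> T2" unfolding T1_def T2_def using orient by blast
  have I: "T1 \<inter> T2 = {}" unfolding T1_def T2_def using orient by blast
  have "T2 = rv ` T1"
  proof
    show "T2 \<subseteq> rv ` T1"
    proof
      fix x assume "x \<in> T2"
      then have "rv x \<in> T1" unfolding T1_def T2_def using rv_cyc by blast
      then show "x \<in> rv ` T1" using image_eqI[where b=x and f=rv and x="rv x"] by simp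
    qed
    show "rv ` T1 \<subseteq> T2" unfolding T1_def T2_def using rv_cyc by auto
  qed
  moreover have "inj_on rv T1" by (metis inj_on_inverseI rv_rv)
  ultimately have "card T2 = card T1" by (simp add: card_image)
  moreover have "finite T1" "finite T2" using cyc_fin[OF assms(1)] U by (metis finite_Un)+
  ultimately have "card (cyc E) = 2 * card T1" using U I card_Un_disjoint by (metis mult_2)
  then show ?thesis unfolding T1_def .
qed

lemma T1_sigma:
  assumes "simple_graph V E" "D \<subseteq> V \<times> V" "bij_betw (\<lambda>(s, t). {s, t}) D E"
  shows "{x \<in> cyc E. fst x \<in> D} =
    (SIGMA p:D. SIGMA u:(nbhd V E (snd p) - {fst p}). common_nbhd V E (fst p) u - {snd p})"
proof -
  have DE: "{s,t} \<in> E" if "(s,t) \<in> D" for s t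
    using assms(3) that unfolding bij_betw_def by force
  have cm: "{p,q} = {q,p}" for p q :: 'a by blast
  have pt: "((s,t),(u,w)) \<in> {x \<in> cyc E. fst x \<in> D} \<longleftrightarrow>
    ((s,t),(u,w)) \<in> (SIGMA p:D. SIGMA u:(nbhd V E (snd p) - {fst p}). common_nbhd V E (fst p) u - {snd p})"
    for s t u w
  proof
    assume "((s,t),(u,w)) \<in> {x \<in> cyc E. fst x \<in> D}"
    then have h: "distinct [s,t,u,w]" "{t,u}\<in>E" "{u,w}\<in>E" "{w,s}\<in>E" "(s,t)\<in>D"
      unfolding cyc_def by simp_all
    have "u \<in> V" "w \<in> V" using edgeV[OF assms(1) h(2)] edgeV[OF assms(1) h(3)] by simp_all
    moreover have "{s,w} \<in> E" using h(4) cm[of w s] by simp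
    ultimately show "((s,t),(u,w)) \<in> (SIGMA p:D. SIGMA u:(nbhd V E (snd p) - {fst p}). common_nbhd V E (fst p) u - {snd p})"
      using h unfolding nbhd_def common_nbhd_def by auto
  next
    assume "((s,t),(u,w)) \<in> (SIGMA p:D. SIGMA u:(nbhd V E (snd p) - {fst p}). common_nbhd V E (fst p) u - {snd p})"
    then have h: "(s,t)\<in>D" "{t,u}\<in>E" "u \<noteq> s" "{s,w}\<in>E" "{u,w}\<in>E" "w \<noteq> t"
      unfolding nbhd_def common_nbhd_def by simp_all
    have st: "{s,t}\<in>E" using DE h(1) by simp
    have "{w,s}\<in>E" using h(4) cm[of w s] by simp
    moreover have "s \<noteq> t" "t \<noteq> u" "s \<noteq> w" "u \<noteq> w"
      using edgeV[OF assms(1) st] edgeV[OF assms(1) h(2)] edgeV[OF assms(1) h(4)] edgeV[OF assms(1) h(5)]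
      by simp_all
    ultimately show "((s,t),(u,w)) \<in> {x \<in> cyc E. fst x \<in> D}"
      using h st unfolding cyc_def by auto
  qed
  show ?thesis
  proof (rule set_eqI)
    fix x :: "('a \<times> 'a) \<times> ('a \<times> 'a)"
    obtain s t u w where "x = ((s,t),(u,w))" by (metis prod.collapse)
    then show "x \<in> {x \<in> cyc E. fst x \<in> D} \<longleftrightarrow>
      x \<in> (SIGMA p:D. SIGMA u:(nbhd V E (snd p) - {fst p}). common_nbhd V E (fst p) u - {snd p})"
      using pt by simp
  qed
qed

theorem proposition11:
  fixes V :: "'a set" and E :: "'a set set" and D :: "('a \<times> 'a) set"
  assumes "simple_graph V E"
    and "D \<subseteq> V \<times> V"
    and "bij_betw (\<lambda>(s, t). {s, t}) D E"
  shows "real (n_C4 V E) =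
    (1/4) * (\<Sum>(s, t)\<in>D. \<Sum>u\<in>nbhd V E t - {s}. (real (card (common_nbhd V E s u)) - 1))"
proof -
  have finV: "finite V" using assms(1) simple_graph_def by blast
  have finD: "finite D" using assms(2) finV by (meson finite_SigmaI finite_subset)
  have DE: "{s,t} \<in> E" if "(s,t) \<in> D" for s t
    using assms(3) that unfolding bij_betw_def by force
  have finN: "finite (nbhd V E x)" for x using finV unfolding nbhd_def by simp
  have finC: "finite (common_nbhd V E x y)" for x y using finN unfolding common_nbhd_def by simp
  have inner: "(\<Sum>u\<in>nbhd V E t - {s}. (real (card (common_nbhd V E s u)) - 1))
      = real (card (SIGMA u:(nbhd V E t - {s}). common_nbhd V E s u - {t}))" if st: "(s,t) \<in> D" for s t
  proof -
    have "(\<Sum>u\<in>nbhd V E t - {s}. (real (card (common_nbhd V E s u)) - 1))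
        = (\<Sum>u\<in>nbhd V E t - {s}. real (card (common_nbhd V E s u - {t})))"
    proof (rule sum.cong)
      fix u assume u: "u \<in> nbhd V E t - {s}"
      have tu: "{t,u} \<in> E" and uV: "u \<in> V" using u unfolding nbhd_def by simp_all
      have cm: "{t,u} = {u,t}" by blast
      have "t \<in> V" using edgeV[OF assms(1) DE[OF st]] by simp
      then have tin: "t \<in> common_nbhd V E s u"
        using DE[OF st] tu cm unfolding common_nbhd_def nbhd_def by simp
      have "card (common_nbhd V E s u) \<noteq> 0" using tin finC[of s u] by (metis card_0_eq empty_iff)
      moreover have "card (common_nbhd V E s u - {t}) = card (common_nbhd V E s u) - 1"
        using tin finC[of s u] by (simp add: card_Diff_singleton)
      ultimately show "real (card (common_nbhd V E s u)) - 1 = real (card (common_nbhd V E s u - {t}))"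
        by (simp add: of_nat_diff)
    qed simp
    also have "\<dots> = real (card (SIGMA u:(nbhd V E t - {s}). common_nbhd V E s u - {t}))"
      using finN finC by simp
    finally show ?thesis .
  qed
  have "(\<Sum>(s, t)\<in>D. \<Sum>u\<in>nbhd V E t - {s}. (real (card (common_nbhd V E s u)) - 1))
      = (\<Sum>p\<in>D. real (card (SIGMA u:(nbhd V E (snd p) - {fst p}). common_nbhd V E (fst p) u - {snd p})))"
    using inner by (intro sum.cong) (simp_all split: prod.splits, blast)
  also have "\<dots> = real (card (SIGMA p:D. SIGMA u:(nbhd V E (snd p) - {fst p}). common_nbhd V E (fst p) u - {snd p}))"
    using finD finN finC by simp
  also have "\<dots> = real (card {x \<in> cyc E. fst x \<in> D})"
    using T1_sigma[OF assms] by simp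
  finally have S: "(\<Sum>(s, t)\<in>D. \<Sum>u\<in>nbhd V E t - {s}. (real (card (common_nbhd V E s u)) - 1))
      = real (card {x \<in> cyc E. fst x \<in> D})" .
  have "card {x \<in> cyc E. fst x \<in> D} = 4 * n_C4 V E"
    using card_T1[OF assms(1,3)] card_cyc[OF assms(1)] by simp
  then show ?thesis using S by simp
qed

end
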